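(* Let $\varepsilon>0$ be a real and $\ell\geq2$ an integer. There exists $t_0$ such that for every integer $t\geq t_0$ there is a constant $c>0$ such that for all positive integers $m\leq n$: if $\ell$ is odd then $z(m,n,\theta_{t,\ell})\geq c\, m^{\frac{\ell+1}{2\ell}-\varepsilon} n^{\frac{\ell+1}{2\ell}-\varepsilon}$, and if $\ell$ is even then $z(m,n,\theta_{t,\ell})\geq c\, m^{\frac12+\frac1\ell-\varepsilon} n^{\frac12-\varepsilon}$.
   Context: For integers $t,\ell\geq2$, the theta graph $\theta_{t,\ell}$ consists of $t$ internally vertex-disjoint paths of length $\ell$ between two fixed vertices. $z(m,n,F)$ is the maximum number of edges in a bipartite graph with parts of sizes $m$ and $n$ containing no copy of $F$ as a subgraph. *)

theory Defs
  imports "HOL-Analysis.Analysis"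
begin

text \<open>A bipartite graph with parts of sizes m and n: edge set
  E \<subseteq> {0..<m} \<times> {0..<n}; a vertex is Inl a (left part) or Inr b (right part).\<close>

definition bip_adj :: "(nat \<times> nat) set \<Rightarrow> nat + nat \<Rightarrow> nat + nat \<Rightarrow> bool" where
  "bip_adj E u v \<longleftrightarrow> (\<exists>a b. (a, b) \<in> E \<and>
      ((u = Inl a \<and> v = Inr b) \<or> (u = Inr b \<and> v = Inl a)))"

definition contains_theta :: "('v \<Rightarrow> 'v \<Rightarrow> bool) \<Rightarrow> nat \<Rightarrow> nat \<Rightarrow> bool" where
  "contains_theta adj t l \<longleftrightarrow> (\<exists>x y (P :: nat \<Rightarrow> nat \<Rightarrow> 'v). x \<noteq> y \<and>
      (\<forall>i<t. P i 0 = x \<and> P i l = y \<and> inj_on (P i) {0..l} \<and>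
             (\<forall>j<l. adj (P i j) (P i (Suc j)))) \<and>
      (\<forall>i<t. \<forall>i'<t. i \<noteq> i' \<longrightarrow>
          (\<forall>j\<in>{0<..<l}. \<forall>j'\<in>{0<..<l}. P i j \<noteq> P i' j')))"

definition z_theta :: "nat \<Rightarrow> nat \<Rightarrow> nat \<Rightarrow> nat \<Rightarrow> nat" where
  "z_theta m n t l = Max {card E | E. E \<subseteq> {0..<m} \<times> {0..<n} \<and>
                                   \<not> contains_theta (bip_adj E) t l}"

end

theory Submission
  imports Defs "HOL-Probability.Probability"
begin


lemma exp_ind_prod:
  fixes K :: "'a set" and p :: real
  assumes K: "finite K" and S: "S \<subseteq> K" and p: "0 \<le> p" "p \<le> 1"
  shows "measure_pmf.expectation (Pi_pmf K False (\<lambda>_. bernoulli_pmf p))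
           (\<lambda>y. \<Prod>e\<in>S. (if y e then 1 else 0 :: real)) = p ^ card S"
proof -
  have "(\<lambda>y. \<Prod>e\<in>S. (if y e then 1 else 0 :: real)) =
        (\<lambda>y. \<Prod>e\<in>K. (\<lambda>e v. if e \<in> S then (if v then 1 else 0) else 1) e (y e))"
    using S K by (intro ext) (simp add: prod.If_cases Int_absorb1 Int_absorb2)
  then have "measure_pmf.expectation (Pi_pmf K False (\<lambda>_. bernoulli_pmf p))
           (\<lambda>y. \<Prod>e\<in>S. (if y e then 1 else 0 :: real)) =
      (\<Prod>e\<in>K. measure_pmf.expectation (bernoulli_pmf p) (\<lambda>v. (\<lambda>e v. if e \<in> S then (if v then 1 else 0) else 1) e v))"
    using K by (simp only:) (rule expectation_prod_Pi_pmf, auto intro: integrable_measure_pmf_finite)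
  also have "\<dots> = (\<Prod>e\<in>K. if e \<in> S then p else 1)"
    using p by (intro prod.cong) auto
  also have "\<dots> = p ^ card S"
    using K S by (simp add: prod.If_cases Int_absorb1)
  finally show ?thesis .
qed

lemma exists_ge_expectation:
  fixes M :: "'a pmf" and f :: "'a \<Rightarrow> real"
  assumes "finite (set_pmf M)"
  shows "\<exists>x\<in>set_pmf M. f x \<ge> measure_pmf.expectation M f"
proof (rule ccontr)
  assume "\<not> ?thesis"
  then have lt: "\<And>x. x \<in> set_pmf M \<Longrightarrow> f x < measure_pmf.expectation M f" by force
  define B where "B = Max (f ` set_pmf M)"
  have ne: "set_pmf M \<noteq> {}" by (simp add: set_pmf_not_empty)
  have B: "B < measure_pmf.expectation M f"
    using assms ne lt unfolding B_def by (subst Max_less_iff) auto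
  have "measure_pmf.expectation M f \<le> measure_pmf.expectation M (\<lambda>_. B)"
    using assms by (intro integral_mono_AE integrable_measure_pmf_finite AE_pmfI)
      (auto simp: B_def)
  also have "\<dots> = B" by simp
  finally show False using B by simp
qed

lemma deletion_prob:
  fixes K :: "'a set" and F :: "'a set set" and p :: real
  assumes K: "finite K" and F: "F \<subseteq> Pow K" and Fk: "\<And>S. S \<in> F \<Longrightarrow> card S \<ge> k"
    and p: "0 \<le> p" "p \<le> 1"
  shows "\<exists>E \<subseteq> K. real (card E) - real (card {S\<in>F. S \<subseteq> E}) \<ge> real (card K) * p - real (card F) * p ^ k"
proof -
  define M where "M = Pi_pmf K False (\<lambda>_. bernoulli_pmf p)"
  have finF: "finite F" using F K by (meson finite_Pow_iff finite_subset)
  have finM: "finite (set_pmf M)"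
    using K unfolding M_def by (subst set_Pi_pmf) auto
  define ind where "ind = (\<lambda>b::bool. if b then 1 else 0 :: real)"
  define f where "f = (\<lambda>y. (\<Sum>e\<in>K. ind (y e)) - (\<Sum>S\<in>F. \<Prod>e\<in>S. ind (y e)))"
  have "measure_pmf.expectation M f =
     (\<Sum>e\<in>K. measure_pmf.expectation M (\<lambda>y. \<Prod>e'\<in>{e}. ind (y e'))) -
     (\<Sum>S\<in>F. measure_pmf.expectation M (\<lambda>y. \<Prod>e\<in>S. ind (y e)))"
    unfolding f_def
    by (subst Bochner_Integration.integral_diff, (rule integrable_measure_pmf_finite[OF finM])+,
        subst Bochner_Integration.integral_sum, rule integrable_measure_pmf_finite[OF finM],
        subst Bochner_Integration.integral_sum, rule integrable_measure_pmf_finite[OF finM]) simp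
  also have "\<dots> = (\<Sum>e\<in>K. p) - (\<Sum>S\<in>F. p ^ card S)"
    unfolding M_def ind_def
    using K F p by (intro arg_cong2[where f="(-)"] sum.cong refl,
        (subst exp_ind_prod; auto)+)
  also have "\<dots> \<ge> real (card K) * p - real (card F) * p ^ k"
  proof -
    have "(\<Sum>S\<in>F. p ^ card S) \<le> (\<Sum>S\<in>F. p ^ k)"
      using p Fk by (intro sum_mono power_decreasing) auto
    then show ?thesis by simp
  qed
  finally have Ef: "measure_pmf.expectation M f \<ge> real (card K) * p - real (card F) * p ^ k" .
  obtain y where "f y \<ge> measure_pmf.expectation M f"
    using exists_ge_expectation[OF finM] by blast
  with Ef have fy: "f y \<ge> real (card K) * p - real (card F) * p ^ k" by simp
  define E where "E = {e\<in>K. y e}"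
  have "(\<Sum>e\<in>K. ind (y e)) = real (card E)"
    unfolding E_def ind_def using K by (simp add: sum.If_cases Int_def)
  moreover have "(\<Sum>S\<in>F. \<Prod>e\<in>S. ind (y e)) = real (card {S\<in>F. S \<subseteq> E})"
  proof -
    have "\<And>S. S \<in> F \<Longrightarrow> (\<Prod>e\<in>S. ind (y e)) = (if S \<subseteq> E then 1 else 0)"
    proof -
      fix S assume SF: "S \<in> F"
      then have fS: "finite S" using F K by (auto intro: finite_subset)
      show "(\<Prod>e\<in>S. ind (y e)) = (if S \<subseteq> E then 1 else 0)"
      proof (cases "S \<subseteq> E")
        case True then show ?thesis unfolding ind_def E_def by (auto intro!: prod.neutral)
      next
        case False
        then obtain x where "x \<in> S" "\<not> y x" using SF F unfolding E_def by auto
        then show ?thesis using fS False unfolding ind_def by (simp add: prod_zero_iff) blast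
      qed
    qed
    then have "(\<Sum>S\<in>F. \<Prod>e\<in>S. ind (y e)) = (\<Sum>S\<in>F. if S \<subseteq> E then 1 else 0)"
      by (intro sum.cong) auto
    then show ?thesis using finF by (simp add: sum.If_cases Int_def)
  qed
  ultimately show ?thesis using fy unfolding f_def E_def by (intro exI[of _ "{e\<in>K. y e}"]) auto
qed




definition ep :: "nat + nat \<Rightarrow> nat + nat \<Rightarrow> nat \<times> nat" where
  "ep u v = (case u of Inl a \<Rightarrow> (a, projr v) | Inr b \<Rightarrow> (projl v, b))"

definition edgesP :: "nat \<Rightarrow> nat \<Rightarrow> (nat \<Rightarrow> nat \<Rightarrow> nat + nat) \<Rightarrow> (nat \<times> nat) set" where
  "edgesP t l P = (\<lambda>(i,j). ep (P i j) (P i (Suc j))) ` ({0..<t} \<times> {0..<l})"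

definition tcfg :: "('v \<Rightarrow> 'v \<Rightarrow> bool) \<Rightarrow> nat \<Rightarrow> nat \<Rightarrow> (nat \<Rightarrow> nat \<Rightarrow> 'v) \<Rightarrow> bool" where
  "tcfg adj t l P \<longleftrightarrow> (\<exists>x y. x \<noteq> y \<and>
      (\<forall>i<t. P i 0 = x \<and> P i l = y \<and> inj_on (P i) {0..l} \<and>
             (\<forall>j<l. adj (P i j) (P i (Suc j)))) \<and>
      (\<forall>i<t. \<forall>i'<t. i \<noteq> i' \<longrightarrow>
          (\<forall>j\<in>{0<..<l}. \<forall>j'\<in>{0<..<l}. P i j \<noteq> P i' j')))"

lemma contains_theta_tcfg: "contains_theta adj t l \<longleftrightarrow> (\<exists>P. tcfg adj t l P)"
  unfolding contains_theta_def tcfg_def by blast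

lemma bip_adj_cases:
  assumes "bip_adj E u v"
  shows "(\<exists>a b. (a,b) \<in> E \<and> u = Inl a \<and> v = Inr b) \<or> (\<exists>a b. (a,b) \<in> E \<and> u = Inr b \<and> v = Inl a)"
  using assms unfolding bip_adj_def by blast

lemma bip_adj_ep: "bip_adj E u v \<Longrightarrow> ep u v \<in> E"
  by (drule bip_adj_cases) (auto simp: ep_def)

lemma bip_adj_mono: "bip_adj E u v \<Longrightarrow> E \<subseteq> E' \<Longrightarrow> bip_adj E' u v"
  unfolding bip_adj_def by blast

lemma ep_inj:
  assumes "bip_adj E u v" "bip_adj E' u' v'" "ep u v = ep u' v'"
  shows "{u, v} = {u', v'}"
  using bip_adj_cases[OF assms(1)] bip_adj_cases[OF assms(2)] assms(3)
  by (elim disjE exE conjE) (simp_all add: ep_def, auto)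

lemma tcfg_mono: "tcfg (bip_adj E) t l P \<Longrightarrow> E \<subseteq> E' \<Longrightarrow> tcfg (bip_adj E') t l P"
  unfolding tcfg_def apply (elim exE conjE)
  subgoal for x y apply (rule exI[of _ x], rule exI[of _ y])
    using bip_adj_mono by simp metis
  done

lemma edgesP_subset: "tcfg (bip_adj E) t l P \<Longrightarrow> edgesP t l P \<subseteq> E"
  unfolding tcfg_def edgesP_def by (fastforce intro!: bip_adj_ep)

lemma edgesP_cong: "(\<And>i j. i < t \<Longrightarrow> j \<le> l \<Longrightarrow> P i j = P' i j) \<Longrightarrow> edgesP t l P = edgesP t l P'"
  unfolding edgesP_def by (intro image_cong) auto

lemma card_edgesP:
  assumes tc: "tcfg (bip_adj E) t l P" and l: "l \<ge> 2"
  shows "card (edgesP t l P) = t * l"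
proof -
  obtain x y where xy: "x \<noteq> y" and
    pathsA: "\<forall>i<t. P i 0 = x \<and> P i l = y \<and> inj_on (P i) {0..l} \<and>
             (\<forall>j<l. bip_adj E (P i j) (P i (Suc j)))" and
    disjA: "\<forall>i<t. \<forall>i'<t. i \<noteq> i' \<longrightarrow>
          (\<forall>j\<in>{0<..<l}. \<forall>j'\<in>{0<..<l}. P i j \<noteq> P i' j')"
    using tc unfolding tcfg_def by (elim exE conjE) (rule that)
  have paths: "P i 0 = x \<and> P i l = y \<and> inj_on (P i) {0..l} \<and>
             (\<forall>j<l. bip_adj E (P i j) (P i (Suc j)))" if "i < t" for i
    using pathsA that by simp
  have disj: "P i j \<noteq> P i' j'" if "i<t" "i'<t" "i \<noteq> i'" "j\<in>{0<..<l}" "j'\<in>{0<..<l}" for i i' j j'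
    using disjA that by simp
  have "inj_on (\<lambda>(i,j). ep (P i j) (P i (Suc j))) ({0..<t} \<times> {0..<l})"
  proof (rule inj_onI, clarify)
    fix i j i' j'
    assume i: "i \<in> {0..<t}" and j: "j \<in> {0..<l}" and i': "i' \<in> {0..<t}" and j': "j' \<in> {0..<l}"
      and eq: "ep (P i j) (P i (Suc j)) = ep (P i' j') (P i' (Suc j'))"
    have adj1: "bip_adj E (P i j) (P i (Suc j))" using paths i j by auto
    have adj2: "bip_adj E (P i' j') (P i' (Suc j'))" using paths i' j' by auto
    have seq: "{P i j, P i (Suc j)} = {P i' j', P i' (Suc j')}"
      using ep_inj[OF adj1 adj2 eq] .
    define k where "k = (if j = 0 then 1 else j)"
    have k: "0 < k" "k < l" "k = j \<or> k = Suc j" using j l unfolding k_def by auto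
    have "P i k \<in> {P i' j', P i' (Suc j')}" using seq k(3) by auto
    then obtain k' where k': "k' = j' \<or> k' = Suc j'" "P i k = P i' k'" by auto
    have injP: "inj_on (P i) {0..l}" using paths i by auto
    have injP': "inj_on (P i') {0..l}" using paths i' by auto
    have ii: "i = i'"
    proof (rule ccontr)
      assume ne: "i \<noteq> i'"
      consider "k' = 0" | "k' = l" | "k' \<in> {0<..<l}" using k' j' by fastforce
      then show False
      proof cases
        case 1
        then have "P i k = P i 0" using k' paths i i' by auto
        then have "k = 0" using inj_onD[OF injP] k by simp
        then show False using k by simp
      next
        case 2
        then have "P i k = P i l" using k' paths i i' by auto
        then have "k = l" using inj_onD[OF injP] k by simp
        then show False using k by simp
      next
        case 3
        then show False using disj[of i i' k k'] i i' ne k k' by auto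
      qed
    qed
    have "P i j \<in> {P i j', P i (Suc j')}" using seq ii by auto
    then have a: "j = j' \<or> j = Suc j'" using inj_onD[OF injP, of j j'] inj_onD[OF injP, of j "Suc j'"] j j' by auto
    have "P i (Suc j) \<in> {P i j', P i (Suc j')}" using seq ii by auto
    then have b: "Suc j = j' \<or> j = j'" using inj_onD[OF injP, of "Suc j" j'] inj_onD[OF injP, of "Suc j" "Suc j'"] j j' by auto
    from a b ii show "i = i' \<and> j = j'" by auto
  qed
  then show ?thesis unfolding edgesP_def by (simp add: card_image card_cartesian_product)
qed




definition V :: "nat \<Rightarrow> nat \<Rightarrow> bool \<Rightarrow> (nat + nat) set" where
  "V m n b = (if b then Inl ` {0..<m} else Inr ` {0..<n})"

definition TT :: "nat \<Rightarrow> nat \<Rightarrow> nat \<Rightarrow> nat \<Rightarrow> bool \<Rightarrow> ((nat+nat) \<times> (nat+nat) \<times> (nat \<times> nat \<Rightarrow> nat+nat)) set" where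
  "TT m n t l b = V m n b \<times> V m n (b = even l) \<times> PiE ({0..<t} \<times> {1..<l}) (\<lambda>ij. V m n (b = even (snd ij)))"

definition gg :: "nat \<Rightarrow> nat \<Rightarrow> ((nat+nat) \<times> (nat+nat) \<times> (nat \<times> nat \<Rightarrow> nat+nat)) \<Rightarrow> (nat\<times>nat) set" where
  "gg t l c = (case c of (x, y, Q) \<Rightarrow> edgesP t l (\<lambda>i j. if j = 0 then x else if j = l then y else Q (i, j)))"

lemma adj_range:
  assumes "bip_adj ({0..<m} \<times> {0..<n}) u v"
  shows "u \<in> V m n (isl u) \<and> v \<in> V m n (isl v) \<and> isl v = (\<not> isl u)"
  using bip_adj_cases[OF assms] by (auto simp: V_def)

lemma vert_side:
  assumes tc: "tcfg (bip_adj ({0..<m} \<times> {0..<n})) t l P" and i: "i < t" and j: "j \<le> l" and l: "l \<ge> 1"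
  shows "P i j \<in> V m n (isl (P i 0) = even j)"
proof -
  have adj: "\<And>j. j < l \<Longrightarrow> bip_adj ({0..<m} \<times> {0..<n}) (P i j) (P i (Suc j))"
    using tc i unfolding tcfg_def by metis
  have side: "isl (P i j) = (isl (P i 0) = even j)" using j
  proof (induction j)
    case 0 then show ?case by simp
  next
    case (Suc j)
    then have "isl (P i (Suc j)) = (\<not> isl (P i j))" using adj_range[OF adj[of j]] by simp
    with Suc show ?case by simp
  qed
  have "P i j \<in> V m n (isl (P i j))"
  proof (cases "j < l")
    case True then show ?thesis using adj_range[OF adj[of j]] by simp
  next
    case False
    then have jl: "j = Suc (l - 1)" using j l by simp
    have "l - 1 < l" using l by simp
    from adj_range[OF adj[OF this]] have "P i (Suc (l-1)) \<in> V m n (isl (P i (Suc (l-1))))" by blast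
    with jl show ?thesis by simp
  qed
  with side show ?thesis by simp
qed

lemma F_subset:
  assumes t: "t \<ge> 1" and l: "l \<ge> 1"
  shows "{edgesP t l P | P. tcfg (bip_adj ({0..<m} \<times> {0..<n})) t l P} \<subseteq> gg t l ` (TT m n t l True \<union> TT m n t l False)"
proof clarify
  fix P assume tc: "tcfg (bip_adj ({0..<m} \<times> {0..<n})) t l P"
  obtain x y where pathsA: "\<forall>i<t. P i 0 = x \<and> P i l = y"
    using tc unfolding tcfg_def by blast
  have x: "P 0 0 = x" and y: "P 0 l = y" using pathsA t by auto
  define b where "b = isl x"
  define Q where "Q = restrict (\<lambda>(i,j). P i j) ({0..<t} \<times> {1..<l})"
  have xV: "x \<in> V m n b" using vert_side[OF tc, of 0 0] t l x unfolding b_def by simp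
  have yV: "y \<in> V m n (b = even l)" using vert_side[OF tc, of 0 l] t l x y unfolding b_def by simp
  have QV: "Q \<in> PiE ({0..<t} \<times> {1..<l}) (\<lambda>ij. V m n (b = even (snd ij)))"
    unfolding Q_def b_def using vert_side[OF tc] pathsA l by (auto simp: PiE_def Pi_def)
  have "gg t l (x, y, Q) = edgesP t l P"
    unfolding gg_def using pathsA by (auto intro!: edgesP_cong simp: Q_def)
  moreover have "(x, y, Q) \<in> TT m n t l True \<union> TT m n t l False"
    using xV yV QV unfolding TT_def by (cases b) auto
  ultimately show "edgesP t l P \<in> gg t l ` (TT m n t l True \<union> TT m n t l False)" by force
qed

lemma card_V: "card (V m n b) = (if b then m else n)"
  by (auto simp: V_def card_image)

lemma finite_V: "finite (V m n b)" by (simp add: V_def)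

lemma card_TT: "card (TT m n t l b) = (if b then m else n) * (if b = even l then m else n) *
   (\<Prod>j\<in>{1..<l}. if b = even j then m else n) ^ t"
proof -
  have "card (PiE ({0..<t} \<times> {1..<l}) (\<lambda>ij. V m n (b = even (snd ij)))) =
     (\<Prod>ij\<in>{0..<t} \<times> {1..<l}. (if b = even (snd ij) then m else n))"
    by (simp add: card_PiE card_V)
  also have "\<dots> = (\<Prod>i\<in>{0..<t}. \<Prod>j\<in>{1..<l}. (if b = even j then m else n))"
    by (subst prod.cartesian_product) (simp add: case_prod_unfold)
  also have "\<dots> = (\<Prod>j\<in>{1..<l}. if b = even j then m else n) ^ t" by simp
  finally show ?thesis unfolding TT_def by (simp add: card_cartesian_product card_V)
qed

lemma finite_TT: "finite (TT m n t l b)"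
  unfolding TT_def by (intro finite_cartesian_product finite_PiE) (auto simp: finite_V)

lemma z_lower:
  assumes t: "t \<ge> 1" and l: "l \<ge> 2" and p: "0 \<le> p" "p \<le> 1"
  shows "real (z_theta m n t l) \<ge> real m * real n * p
     - real (card (TT m n t l True) + card (TT m n t l False)) * p ^ (t * l)"
proof -
  define K where "K = {0..<m} \<times> {0..<n}"
  define F where "F = {edgesP t l P | P. tcfg (bip_adj K) t l P}"
  have finK: "finite K" unfolding K_def by simp
  have FK: "F \<subseteq> Pow K" unfolding F_def using edgesP_subset[where E=K] by blast
  have Fc: "\<And>S. S \<in> F \<Longrightarrow> card S \<ge> t * l" unfolding F_def using card_edgesP[OF _ l] by auto
  have cardF: "card F \<le> card (TT m n t l True) + card (TT m n t l False)"
  proof -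
    have "card F \<le> card (gg t l ` (TT m n t l True \<union> TT m n t l False))"
      using F_subset[OF t, of l m n] l unfolding F_def K_def
      by (intro card_mono finite_imageI) (auto simp: finite_TT)
    also have "\<dots> \<le> card (TT m n t l True \<union> TT m n t l False)" by (rule card_image_le) (simp add: finite_TT)
    also have "\<dots> \<le> card (TT m n t l True) + card (TT m n t l False)" by (rule card_Un_le)
    finally show ?thesis .
  qed
  obtain E where EK: "E \<subseteq> K" and Eb: "real (card E) - real (card {S\<in>F. S \<subseteq> E}) \<ge> real (card K) * p - real (card F) * p ^ (t*l)"
    using deletion_prob[OF finK FK Fc p] by blast
  define B where "B = {S\<in>F. S \<subseteq> E}"
  define D where "D = (\<lambda>S. SOME e. e \<in> S) ` B"
  define E' where "E' = E - D"
  have finE: "finite E" using EK finK finite_subset by blast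
  have finB: "finite B"
  proof (rule finite_subset[of B "Pow K"])
    show "B \<subseteq> Pow K" unfolding B_def using FK by auto
  qed (simp add: finK)
  have "card E \<le> card E' + card D"
  proof -
    have "E \<subseteq> E' \<union> D" unfolding E'_def by blast
    then have "card E \<le> card (E' \<union> D)" using finE finB unfolding E'_def D_def by (intro card_mono) auto
    also have "\<dots> \<le> card E' + card D" by (rule card_Un_le)
    finally show ?thesis .
  qed
  moreover have "card D \<le> card B" unfolding D_def using finB by (rule card_image_le)
  ultimately have cE': "real (card E') \<ge> real (card E) - real (card B)" by linarith
  have E'K: "E' \<subseteq> {0..<m} \<times> {0..<n}" using EK unfolding E'_def K_def by blast
  have free: "\<not> contains_theta (bip_adj E') t l"
  proof
    assume "contains_theta (bip_adj E') t l"
    then obtain P where tc: "tcfg (bip_adj E') t l P" by (auto simp: contains_theta_tcfg)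
    define S where "S = edgesP t l P"
    have "S \<subseteq> E'" unfolding S_def using edgesP_subset[OF tc] .
    have "tcfg (bip_adj K) t l P" using tcfg_mono[OF tc E'K] unfolding K_def .
    then have SF: "S \<in> F" unfolding F_def S_def by blast
    have "card S \<ge> t * l" using Fc[OF SF] .
    moreover have "t * l > 0" using t l by simp
    ultimately have "S \<noteq> {}" by auto
    then have "(SOME e. e \<in> S) \<in> S" by (simp add: some_in_eq)
    moreover have "S \<in> B" unfolding B_def using SF \<open>S \<subseteq> E'\<close> unfolding E'_def by blast
    ultimately have "(SOME e. e \<in> S) \<in> D \<inter> S" unfolding D_def by blast
    then show False using \<open>S \<subseteq> E'\<close> unfolding E'_def by blast
  qed
  have zge: "card E' \<le> z_theta m n t l"
    unfolding z_theta_def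
  proof (rule Max_ge)
    show "finite {card E |E. E \<subseteq> {0..<m} \<times> {0..<n} \<and> \<not> contains_theta (bip_adj E) t l}"
      by (rule finite_subset[of _ "card ` Pow ({0..<m} \<times> {0..<n})"]) auto
    show "card E' \<in> {card E |E. E \<subseteq> {0..<m} \<times> {0..<n} \<and> \<not> contains_theta (bip_adj E) t l}"
      using E'K free by blast
  qed
  have "real (card K) * p = real m * real n * p" unfolding K_def by (simp add: card_cartesian_product)
  moreover have "real (card E') \<le> real (z_theta m n t l)" using zge by simp
  moreover have "real (card F) * p ^ (t*l) \<le> real (card (TT m n t l True) + card (TT m n t l False)) * p ^ (t*l)"
    using cardF p by (intro mult_right_mono) auto
  ultimately show ?thesis using Eb cE' zge unfolding B_def by linarith
qed




lemma odd_analytic: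
  fixes X eps z :: real and r t l :: nat
  assumes X: "X \<ge> 1" and l: "l = 2*r+1" "r \<ge> 1" and eps: "eps > 0" and st: "eps * real t * real l \<ge> 2 + eps"
    and t: "t \<ge> 1"
    and hz: "\<And>p. 0 \<le> p \<Longrightarrow> p \<le> 1 \<Longrightarrow> z \<ge> X * p - 2 * X * X ^ (r*t) * p ^ (t*l)"
  shows "z \<ge> 1/8 * X powr ((real l + 1) / (2 * real l) - eps)"
proof -
  define a where "a = (real l + 1) / (2 * real l) - eps"
  define k where "k = t * l"
  define p where "p = 1/4 * X powr (a - 1)"
  have lpos: "real l > 0" using l by simp
  have l1: "real l \<ge> 1" using l by simp
  have h1: "(real l + 1) / (2 * real l) \<le> 1" using l1 by (simp add: divide_le_eq_1)
  have a1: "a \<le> 1" unfolding a_def using h1 eps by linarith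
  have a0: "a \<ge> - eps" unfolding a_def using lpos by (simp add: field_simps)
  have Xpos: "X > 0" using X by simp
  have pe: "X powr (a - 1) \<le> 1" using powr_mono[of "a - 1" 0 X] X a1 by simp
  have p0: "0 \<le> p" "p \<le> 1" unfolding p_def using pe by auto
  have "z \<ge> X * p - 2 * X * X ^ (r*t) * p ^ k" using hz[OF p0] unfolding k_def .
  moreover have "X * p = 1/4 * X powr a"
    unfolding p_def using powr_mult_base[of X "a - 1"] Xpos by simp
  moreover have "2 * X * X ^ (r*t) * p ^ k = 2 * (1/4)^k * X powr (1 + real (r*t) + real k * (a - 1))"
  proof -
    have "p ^ k = (1/4)^k * X powr (real k * (a - 1))"
      unfolding p_def using Xpos by (subst power_mult_distrib) (simp add: powr_power)
    moreover have "X ^ (r*t) = X powr real (r*t)" using Xpos by (rule powr_realpow[symmetric])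
    moreover have "X = X powr 1" using Xpos by simp
    ultimately have "2 * X * X ^ (r*t) * p ^ k = 2 * (1/4)^k * (X powr 1 * X powr real (r*t) * X powr (real k * (a - 1)))"
      by (metis (no_types, lifting) mult.assoc mult.left_commute)
    also have "\<dots> = 2 * (1/4)^k * X powr (1 + real (r*t) + real k * (a - 1))"
      by (simp only: powr_add[symmetric])
    finally show ?thesis .
  qed
  moreover have "1 + real (r*t) + real k * (a - 1) = 1 - eps * real k"
    unfolding a_def k_def using l lpos by (simp add: field_simps)
  moreover have "X powr (1 - eps * real k) \<le> X powr a"
  proof (rule powr_mono[OF _ X])
    show "1 - eps * real k \<le> a" using st a0 unfolding k_def by simp
  qed
  moreover have "(1/4::real)^k \<le> (1/4)^2"
  proof (rule power_decreasing)
    have "1 * 2 \<le> t * l" using l t by (intro mult_le_mono) auto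
    then show "2 \<le> k" unfolding k_def by simp
  qed auto
  ultimately have "z \<ge> 1/4 * X powr a - 2 * (1/4)^2 * X powr a"
  proof -
    assume z1: "z \<ge> X * p - 2 * X * X ^ (r*t) * p ^ k" and e1: "X * p = 1/4 * X powr a"
      and e2: "2 * X * X ^ (r*t) * p ^ k = 2 * (1/4)^k * X powr (1 + real (r*t) + real k * (a - 1))"
      and e3: "1 + real (r*t) + real k * (a - 1) = 1 - eps * real k"
      and i1: "X powr (1 - eps * real k) \<le> X powr a" and i2: "(1/4::real)^k \<le> (1/4)^2"
    have "2 * (1/4)^k * X powr (1 + real (r*t) + real k * (a - 1)) \<le> 2 * (1/4)^2 * X powr a"
      unfolding e3 using i1 i2 by (intro mult_mono) auto
    then show ?thesis using z1 e1 e2 by linarith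
  qed
  then show ?thesis unfolding a_def by (simp add: power2_eq_square)
qed


lemma even_analytic:
  fixes M N eps z :: real and r t l :: nat
  assumes M: "M \<ge> 1" and MN: "M \<le> N" and l: "l = 2*r+2" and eps: "eps > 0"
    and st: "eps * real t * real l \<ge> 2 + eps" and t: "t \<ge> 1"
    and hz: "\<And>p. 0 \<le> p \<Longrightarrow> p \<le> 1 \<Longrightarrow>
       z \<ge> M * N * p - (M * M * (M ^ r * N ^ (r+1)) ^ t + N * N * (N ^ r * M ^ (r+1)) ^ t) * p ^ (t*l)"
  shows "z \<ge> 1/8 * M powr (1/2 + 1 / real l - eps) * N powr (1/2 - eps)"
proof -
  define A where "A = 1/2 + 1 / real l - eps"
  define B where "B = 1/2 - eps"
  define k where "k = t * l"
  define s where "s = eps * real k"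
  define p where "p = 1/4 * M powr (A - 1) * N powr (B - 1)"
  have N: "N \<ge> 1" using M MN by simp
  have Mpos: "M > 0" and Npos: "N > 0" using M N by auto
  have l2: "real l \<ge> 2" using l by simp
  have hl: "1 / real l \<le> 1/2" using l2 by (simp add: divide_le_eq)
  have A1: "A \<le> 1" unfolding A_def using hl eps by linarith
  have B1: "B \<le> 1" unfolding B_def using eps by linarith
  have A0: "A \<ge> - eps" unfolding A_def using l2 by simp
  have s2: "s \<ge> 2 + eps" unfolding s_def k_def using st by simp
  have pM: "M powr (A - 1) \<le> 1" using powr_mono[of "A - 1" 0 M] M A1 by simp
  have pN: "N powr (B - 1) \<le> 1" using powr_mono[of "B - 1" 0 N] N B1 by simp
  have p0: "0 \<le> p" "p \<le> 1" unfolding p_def using pM pN mult_mono[OF pM pN] by auto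
  have zz: "z \<ge> M * N * p - (M * M * (M ^ r * N ^ (r+1)) ^ t + N * N * (N ^ r * M ^ (r+1)) ^ t) * p ^ k"
    using hz[OF p0] unfolding k_def .
  have e1: "M * N * p = 1/4 * (M powr A * N powr B)"
  proof -
    have "M * M powr (A - 1) = M powr A" using powr_mult_base[of M "A - 1"] Mpos by simp
    moreover have "N * N powr (B - 1) = N powr B" using powr_mult_base[of N "B - 1"] Npos by simp
    ultimately show ?thesis unfolding p_def by (metis (no_types, lifting) mult.assoc mult.left_commute)
  qed
  have pk: "p ^ k = (1/4)^k * (M powr (real k * (A - 1)) * N powr (real k * (B - 1)))"
    unfolding p_def using Mpos Npos by (simp only: power_mult_distrib powr_power)
  have rw: "\<And>X::real. \<And>j. X > 0 \<Longrightarrow> X ^ j = X powr real j" by (simp add: powr_realpow)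
  have c1: "M * M * (M ^ r * N ^ (r+1)) ^ t = M powr real (2 + r*t) * N powr real ((r+1)*t)"
  proof -
    have "M * M * (M ^ r * N ^ (r+1)) ^ t = M ^ (2 + r*t) * N ^ ((r+1)*t)"
      by (simp add: power_mult_distrib power_mult[symmetric] power_add mult.commute power2_eq_square)
    then show ?thesis by (simp only: powr_realpow[OF Mpos] powr_realpow[OF Npos])
  qed
  have c2: "N * N * (N ^ r * M ^ (r+1)) ^ t = M powr real ((r+1)*t) * N powr real (2 + r*t)"
  proof -
    have "N * N * (N ^ r * M ^ (r+1)) ^ t = M ^ ((r+1)*t) * N ^ (2 + r*t)"
      by (simp add: power_mult_distrib power_mult[symmetric] power_add mult.commute power2_eq_square)
    then show ?thesis by (simp only: powr_realpow[OF Mpos] powr_realpow[OF Npos])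
  qed
  have kA: "real k * (A - 1) = - real r * real t - s" unfolding k_def A_def s_def using l by (simp add: field_simps)
  have kB: "real k * (B - 1) = - (real r + 1) * real t - s" unfolding k_def B_def s_def using l by (simp add: field_simps)
  have T1: "M * M * (M ^ r * N ^ (r+1)) ^ t * p ^ k = (1/4)^k * (M powr (2 - s) * N powr (- s))"
  proof -
    have "M * M * (M ^ r * N ^ (r+1)) ^ t * p ^ k =
       (1/4)^k * ((M powr real (2 + r*t) * M powr (real k * (A - 1))) * (N powr real ((r+1)*t) * N powr (real k * (B - 1))))"
      unfolding c1 pk by (simp add: algebra_simps)
    also have "\<dots> = (1/4)^k * (M powr (real (2 + r*t) + real k * (A - 1)) * N powr (real ((r+1)*t) + real k * (B - 1)))"
      by (simp only: powr_add)
    also have "real (2 + r*t) + real k * (A - 1) = 2 - s" unfolding kA by simp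
    also have "real ((r+1)*t) + real k * (B - 1) = - s" unfolding kB by (simp add: algebra_simps)
    finally show ?thesis .
  qed
  have T2: "N * N * (N ^ r * M ^ (r+1)) ^ t * p ^ k = (1/4)^k * (M powr (real t - s) * N powr (2 - real t - s))"
  proof -
    have "N * N * (N ^ r * M ^ (r+1)) ^ t * p ^ k =
       (1/4)^k * ((M powr real ((r+1)*t) * M powr (real k * (A - 1))) * (N powr real (2 + r*t) * N powr (real k * (B - 1))))"
      unfolding c2 pk by (simp add: algebra_simps)
    also have "\<dots> = (1/4)^k * (M powr (real ((r+1)*t) + real k * (A - 1)) * N powr (real (2 + r*t) + real k * (B - 1)))"
      by (simp only: powr_add)
    also have "real ((r+1)*t) + real k * (A - 1) = real t - s" unfolding kA by (simp add: algebra_simps)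
    also have "real (2 + r*t) + real k * (B - 1) = 2 - real t - s" unfolding kB by (simp add: algebra_simps)
    finally show ?thesis .
  qed
  have b1: "M powr (2 - s) * N powr (- s) \<le> M powr A * N powr B"
  proof (rule mult_mono)
    show "M powr (2 - s) \<le> M powr A" using powr_mono[OF _ M] s2 A0 by simp
    show "N powr (- s) \<le> N powr B" using powr_mono[OF _ N] s2 unfolding B_def by simp
  qed auto
  have b2: "M powr (real t - s) * N powr (2 - real t - s) \<le> M powr A * N powr B"
  proof (cases "real t - s \<ge> A")
    case True
    have "M powr (real t - s) = M powr (real t - s - A) * M powr A" by (simp add: powr_add[symmetric])
    also have "\<dots> \<le> N powr (real t - s - A) * M powr A"
      using True Mpos MN by (intro mult_right_mono powr_mono2) auto
    finally have h: "M powr (real t - s) \<le> N powr (real t - s - A) * M powr A" .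
    have "M powr (real t - s) * N powr (2 - real t - s) \<le> (N powr (real t - s - A) * M powr A) * N powr (2 - real t - s)"
      using h by (rule mult_right_mono) simp
    also have "\<dots> = (N powr (real t - s - A) * N powr (2 - real t - s)) * M powr A" by (simp add: ac_simps)
    also have "N powr (real t - s - A) * N powr (2 - real t - s) = N powr (2 - 2 * s - A)"
      by (simp add: powr_add[symmetric] algebra_simps)
    also have "N powr (2 - 2 * s - A) * M powr A \<le> N powr B * M powr A"
    proof (rule mult_right_mono)
      have "1 / real l \<ge> 0" by simp
      then have "2 - 2 * s - A \<le> B" using s2 unfolding A_def B_def by linarith
      then show "N powr (2 - 2 * s - A) \<le> N powr B" using powr_mono[OF _ N] by blast
    qed simp
    finally show ?thesis by (simp add: ac_simps)
  next
    case False
    show ?thesis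
    proof (rule mult_mono)
      show "M powr (real t - s) \<le> M powr A" using powr_mono[OF _ M] False by simp
      show "N powr (2 - real t - s) \<le> N powr B" using powr_mono[OF _ N] s2 unfolding B_def by simp
    qed auto
  qed
  have q: "(1/4::real)^k \<le> (1/4)^2"
  proof (rule power_decreasing)
    have "1 * 2 \<le> t * l" using l t by (intro mult_le_mono) auto
    then show "2 \<le> k" unfolding k_def by simp
  qed auto
  define W where "W = M powr A * N powr B"
  have W0: "W \<ge> 0" unfolding W_def by simp
  have "(M * M * (M ^ r * N ^ (r+1)) ^ t + N * N * (N ^ r * M ^ (r+1)) ^ t) * p ^ k \<le> 2 * (1/4)^k * W"
  proof -
    have q0: "(1/4::real)^k \<ge> 0" by simp
    have i1: "(1/4)^k * (M powr (2 - s) * N powr (- s)) \<le> (1/4)^k * W"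
      unfolding W_def using mult_left_mono[OF b1 q0] .
    have i2: "(1/4)^k * (M powr (real t - s) * N powr (2 - real t - s)) \<le> (1/4)^k * W"
      unfolding W_def using mult_left_mono[OF b2 q0] .
    show ?thesis unfolding distrib_right T1 T2 using i1 i2 by linarith
  qed
  also have "\<dots> \<le> 2 * (1/4)^2 * W" using q W0 by (intro mult_right_mono) auto
  finally have "z \<ge> 1/4 * W - 2 * (1/4)^2 * W" using zz e1 unfolding W_def by linarith
  then show ?thesis unfolding W_def A_def B_def by (simp add: power2_eq_square mult.commute)
qed




lemma prodpar:
  fixes u v :: nat
  shows "(\<Prod>j\<in>{1..<2*r+1}. if even j then u else v) = u^r * v^r \<and>
         (\<Prod>j\<in>{1..<2*r+2}. if even j then u else v) = u^r * v^(r+1)"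
proof (induction r)
  case 0 then show ?case by simp
next
  case (Suc r)
  have a: "(\<Prod>j\<in>{1..<2*Suc r+1}. if even j then u else v) = (\<Prod>j\<in>{1..<2*r+2}. if even j then u else v) * u"
    by (simp add: prod.atLeastLessThan_Suc)
  have b: "(\<Prod>j\<in>{1..<2*Suc r+2}. if even j then u else v) = (\<Prod>j\<in>{1..<2*Suc r+1}. if even j then u else v) * v"
    by (simp add: prod.atLeastLessThan_Suc)
  show ?case using a b Suc by (simp add: algebra_simps)
qed

lemma ifF: "(\<Prod>j\<in>A. if False = even j then m else n) = (\<Prod>j\<in>A. if even j then n else (m::nat))"
  by (intro prod.cong) auto

lemma ifT: "(\<Prod>j\<in>A. if True = even j then m else n) = (\<Prod>j\<in>A. if even j then m else (n::nat))"
  by (intro prod.cong) auto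

lemma card_odd:
  assumes "l = 2*r+1"
  shows "real (card (TT m n t l True) + card (TT m n t l False)) = 2 * (real m * real n) * (real m * real n) ^ (r*t)"
proof -
  have h1: "(\<Prod>j\<in>{1..<l}. if even j then m else n) = m^r * n^r"
    using assms prodpar[where r=r and u=m and v=n] by simp
  have h2: "(\<Prod>j\<in>{1..<l}. if even j then n else m) = n^r * m^r"
    using assms prodpar[where r=r and u=n and v=m] by simp
  have "card (TT m n t l True) = m * n * (m^r * n^r)^t"
    by (simp only: card_TT ifT h1 if_True) (simp add: assms)
  moreover have "card (TT m n t l False) = n * m * (n^r * m^r)^t"
    by (simp only: card_TT ifF h2 if_False) (simp add: assms)
  ultimately show ?thesis by (simp add: power_mult power_mult_distrib algebra_simps)
qed

lemma card_even:
  assumes "l = 2*r+2"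
  shows "real (card (TT m n t l True) + card (TT m n t l False)) =
     real m * real m * (real m ^ r * real n ^ (r+1)) ^ t + real n * real n * (real n ^ r * real m ^ (r+1)) ^ t"
proof -
  have h1: "(\<Prod>j\<in>{1..<l}. if even j then m else n) = m^r * n^(r+1)"
    using assms prodpar[where r=r and u=m and v=n] by simp
  have h2: "(\<Prod>j\<in>{1..<l}. if even j then n else m) = n^r * m^(r+1)"
    using assms prodpar[where r=r and u=n and v=m] by simp
  have "card (TT m n t l True) = m * m * (m^r * n^(r+1))^t"
    by (simp only: card_TT ifT h1 if_True) (simp add: assms)
  moreover have "card (TT m n t l False) = n * n * (n^r * m^(r+1))^t"
    by (simp only: card_TT ifF h2 if_False) (simp add: assms)
  ultimately show ?thesis by simp
qed

theorem mainTheorem9: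
  fixes \<epsilon> :: real and l :: nat
  assumes "\<epsilon> > 0" and "l \<ge> 2"
  shows "\<exists>t0::nat. \<forall>t\<ge>t0. \<exists>c::real. c > 0 \<and>
    (\<forall>m n :: nat. 0 < m \<and> m \<le> n \<longrightarrow>
      (odd l \<longrightarrow> real (z_theta m n t l) \<ge>
          c * real m powr ((real l + 1) / (2 * real l) - \<epsilon>)
            * real n powr ((real l + 1) / (2 * real l) - \<epsilon>)) \<and>
      (even l \<longrightarrow> real (z_theta m n t l) \<ge>
          c * real m powr (1/2 + 1 / real l - \<epsilon>) * real n powr (1/2 - \<epsilon>)))"
proof (rule exI[of _ "nat \<lceil>(2 + \<epsilon>) / \<epsilon>\<rceil> + 1"], intro allI impI)
  fix t :: nat
  assume tt: "nat \<lceil>(2 + \<epsilon>) / \<epsilon>\<rceil> + 1 \<le> t"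
  have eps: "\<epsilon> > 0" and l: "l \<ge> 2" using assms by auto
  have t1: "t \<ge> 1" using tt by simp
  have "(2 + \<epsilon>) / \<epsilon> \<le> real t"
  proof -
    have "(2 + \<epsilon>) / \<epsilon> \<le> real (nat \<lceil>(2 + \<epsilon>) / \<epsilon>\<rceil>)" by (rule real_nat_ceiling_ge)
    also have "\<dots> \<le> real t" using tt by (simp only: of_nat_le_iff)
    finally show ?thesis .
  qed
  then have "2 + \<epsilon> \<le> \<epsilon> * real t" using eps by (simp add: divide_le_eq mult.commute)
  also have "\<epsilon> * real t \<le> \<epsilon> * real t * real l"
  proof -
    have "\<epsilon> * real t \<ge> 0" using eps by simp
    moreover have "real l \<ge> 1" using l by simp
    ultimately show ?thesis using mult_left_mono[of 1 "real l" "\<epsilon> * real t"] by simp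
  qed
  finally have st: "2 + \<epsilon> \<le> \<epsilon> * real t * real l" .
  show "\<exists>c::real. c > 0 \<and>
    (\<forall>m n :: nat. 0 < m \<and> m \<le> n \<longrightarrow>
      (odd l \<longrightarrow> real (z_theta m n t l) \<ge>
          c * real m powr ((real l + 1) / (2 * real l) - \<epsilon>)
            * real n powr ((real l + 1) / (2 * real l) - \<epsilon>)) \<and>
      (even l \<longrightarrow> real (z_theta m n t l) \<ge>
          c * real m powr (1/2 + 1 / real l - \<epsilon>) * real n powr (1/2 - \<epsilon>)))"
  proof (intro exI[of _ "1/8"] conjI allI impI)
    show "(1/8::real) > 0" by simp
  next
    fix m n :: nat
    assume mn: "0 < m \<and> m \<le> n"
    have M1: "real m \<ge> 1" and MN: "real m \<le> real n" using mn by auto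
      assume "odd l"
      then obtain r where lr: "l = 2*r+1" using oddE by blast
      with l have r1: "r \<ge> 1" by simp
      have X: "real m * real n \<ge> 1" using mult_mono[of 1 "real m" 1 "real n"] M1 MN by simp
      have "real (z_theta m n t l) \<ge> 1/8 * (real m * real n) powr ((real l + 1) / (2 * real l) - \<epsilon>)"
      proof (rule odd_analytic[OF X lr r1 eps st t1])
        fix p :: real assume "0 \<le> p" "p \<le> 1"
        from z_lower[OF t1 l this, of m n]
        show "real (z_theta m n t l) \<ge> real m * real n * p - 2 * (real m * real n) * (real m * real n) ^ (r*t) * p ^ (t*l)"
          unfolding card_odd[OF lr] by simp
      qed
      then show "real (z_theta m n t l) \<ge>
          1/8 * real m powr ((real l + 1) / (2 * real l) - \<epsilon>)
            * real n powr ((real l + 1) / (2 * real l) - \<epsilon>)"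
        by (simp add: powr_mult mult.assoc)
  next
    fix m n :: nat
    assume mn: "0 < m \<and> m \<le> n"
    have M1: "real m \<ge> 1" and MN: "real m \<le> real n" using mn by auto
      assume "even l"
      then obtain r0 where r0: "l = 2*r0" using evenE by blast
      define r where "r = r0 - 1"
      have lr: "l = 2*r+2" using r0 l unfolding r_def by simp
      show "real (z_theta m n t l) \<ge> 1/8 * real m powr (1/2 + 1 / real l - \<epsilon>) * real n powr (1/2 - \<epsilon>)"
      proof (rule even_analytic[OF M1 MN lr eps st t1])
        fix p :: real assume "0 \<le> p" "p \<le> 1"
        from z_lower[OF t1 l this, of m n]
        show "real (z_theta m n t l) \<ge> real m * real n * p - (real m * real m * (real m ^ r * real n ^ (r+1)) ^ t + real n * real n * (real n ^ r * real m ^ (r+1)) ^ t) * p ^ (t*l)"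
          unfolding card_even[OF lr] .
      qed
  qed
qed


end
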